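(* Let $\Omega\subset\mathbb{R}^2$ be a bounded open convex set containing the origin, satisfying $\sup_{\theta\in S^1}\sup_{\delta>0}\delta^{-1/2}\mu(\theta,\delta)<\infty$. Let $10\le r\le R<\infty$ and $R^{1/2}\le h\le R$. Let $J$ be a closed line segment whose endpoints lie in $\mathbb{Z}^2$, let $\mathbb{J}=J\cap\mathbb{Z}^2$, and assume $\mathrm{card}(\mathbb{J})\ge10$ and that the ninefold dilate $9J$ (the segment concentric with and parallel to $J$ of $9$ times its length) is contained in $\mathcal{A}(r,h)$. Let $d=d(\mathbb{J})$ be the distance between consecutive lattice points on $J$ and $$\mathcal{T}(\mathbb{J})=R^{3/4}d^{1/2}h^{-1/2}r^{-1/4}.$$ Then, with an implicit constant depending only on $\Omega$, $$\sqrt{Rr}\sum_{\ell\in\mathbb{J}}\mu\big(\tfrac{\ell}{|\ell|},\tfrac1{R|\ell|}\big)\lesssim\begin{cases}\big(\frac{Rr}{h^2d^2}\big)^{1/4}&\text{if }\mathrm{card}(\mathbb{J})\le\mathcal{T}(\mathbb{J}),\\[2pt] \big(\frac{r\,\mathrm{card}(\mathbb{J})}{hd^2}\big)^{1/3}&\text{if }\mathrm{card}(\mathbb{J})\ge\mathcal{T}(\mathbb{J}).\end{cases}$$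
   Context: $\rho^*(\xi)=\sup\{\langle x,\xi\rangle:x\in\Omega\}$. For $\theta\in S^1$, $\delta>0$ let $\mu(\theta,\delta)=\mathrm{diam}\{x\in\partial\Omega:\langle x,\theta\rangle=\rho^*(\theta)-\delta\}$ (diameter of the empty set is $0$). The annulus is $\mathcal{A}(r,h)=\{x\in\mathbb{R}^2:r\le\rho^*(x)\le r+h^{-1}\}$. *)

theory Defs
  imports "HOL-Analysis.Analysis"
begin

definition rho_star :: "(real^2) set \<Rightarrow> real^2 \<Rightarrow> real" where
  "rho_star \<Omega> \<xi> = (SUP x\<in>\<Omega>. inner x \<xi>)"

text \<open>mu(theta, delta): diameter of a boundary chord (diameter of empty set is 0).\<close>
definition mu :: "(real^2) set \<Rightarrow> real^2 \<Rightarrow> real \<Rightarrow> real" where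
  "mu \<Omega> \<theta> \<delta> = diameter {x \<in> frontier \<Omega>. inner x \<theta> = rho_star \<Omega> \<theta> - \<delta>}"

definition annulus :: "(real^2) set \<Rightarrow> real \<Rightarrow> real \<Rightarrow> (real^2) set" where
  "annulus \<Omega> r h = {x. r \<le> rho_star \<Omega> x \<and> rho_star \<Omega> x \<le> r + 1 / h}"

definition Z2 :: "(real^2) set" where
  "Z2 = {x. \<forall>i. x $ i \<in> \<int>}"

definition dilate9 :: "real^2 \<Rightarrow> real^2 \<Rightarrow> (real^2) set" where
  "dilate9 a b = closed_segment ((a + b) /\<^sub>R 2 - (9/2) *\<^sub>R (b - a))
                                  ((a + b) /\<^sub>R 2 + (9/2) *\<^sub>R (b - a))"

text \<open>Distance between consecutive lattice points of a lattice point set on a line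
  (these are equally spaced, so it is the minimal distance between distinct points).\<close>
definition lattice_gap :: "(real^2) set \<Rightarrow> real" where
  "lattice_gap L = Inf {dist p q | p q. p \<in> L \<and> q \<in> L \<and> p \<noteq> q}"

end

theory Submission
  imports Defs
begin




definition det2 :: "real^2 \<Rightarrow> real^2 \<Rightarrow> real" where
  "det2 x y = x$1 * y$2 - x$2 * y$1"

lemma inner2: "inner (x::real^2) y = x$1*y$1 + x$2*y$2"
  by (simp add: inner_vec_def sum_2)

lemma norm2sq: "(norm (x::real^2))^2 = (x$1)^2 + (x$2)^2"
  unfolding power2_norm_eq_inner by (simp add: inner2 power2_eq_square)

lemma ident1:
  assumes "norm (u::real^2) = 1"
  shows "inner p l = inner p u * inner l u + det2 l u * det2 p u"
proof -
  have "(u$1)^2 + (u$2)^2 = 1" using assms norm2sq[of u] by simp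
  then show ?thesis unfolding inner2 det2_def
    by (simp add: algebra_simps power2_eq_square) (smt (verit, ccfv_threshold) distrib_left mult.commute mult.left_commute mult_cancel_left1)
qed

lemma ident2:
  assumes "norm (u::real^2) = 1"
  shows "(norm p)^2 = (inner p u)^2 + (det2 p u)^2"
  unfolding power2_norm_eq_inner using ident1[OF assms, of p p] by (simp add: power2_eq_square)

lemma det2_shift: "det2 (a + t *\<^sub>R u) u = det2 a u"
  unfolding det2_def by (simp add: algebra_simps)

lemma Z2_dist:
  assumes "a \<in> Z2" "b \<in> Z2" "a \<noteq> b"
  shows "1 \<le> norm (a - b)"
proof -
  obtain i where i: "a$i \<noteq> b$i" using assms(3) by (metis vec_eq_iff)
  have "a$i - b$i \<in> \<int>" using assms unfolding Z2_def by auto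
  then obtain k where k: "a$i - b$i = of_int k" by (auto elim: Ints_cases)
  have "k \<noteq> 0" using i k by auto
  hence "1 \<le> \<bar>a$i - b$i\<bar>" using k by simp
  also have "\<dots> \<le> norm (a - b)"
    by (metis component_le_norm_cart vector_minus_component)
  finally show ?thesis .
qed



lemma rs_bdd:
  assumes "bounded \<Omega>"
  shows "bdd_above ((\<lambda>y. inner y x) ` \<Omega>)"
proof -
  obtain B where B: "\<And>y. y \<in> \<Omega> \<Longrightarrow> norm y \<le> B" using assms bounded_iff by blast
  show ?thesis
  proof (rule bdd_aboveI2)
    fix y assume "y \<in> \<Omega>"
    have "inner y x \<le> norm y * norm x" by (simp add: norm_cauchy_schwarz)
    also have "\<dots> \<le> B * norm x" using B[OF \<open>y \<in> \<Omega>\<close>] by (simp add: mult_right_mono)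
    finally show "inner y x \<le> B * norm x" .
  qed
qed

lemma rs_upper:
  assumes "bounded \<Omega>" "\<Omega> \<noteq> {}" "y \<in> closure \<Omega>"
  shows "inner y x \<le> rho_star \<Omega> x"
proof -
  have "\<And>y. y\<in>\<Omega> \<Longrightarrow> inner y x \<le> rho_star \<Omega> x" unfolding rho_star_def
    by (rule cSUP_upper[OF _ rs_bdd[OF assms(1)]])
  hence "\<Omega> \<subseteq> {y. inner y x \<le> rho_star \<Omega> x}" by auto
  moreover have "closed {y. inner y x \<le> rho_star \<Omega> x}"
    by (intro closed_Collect_le continuous_intros)
  ultimately have "closure \<Omega> \<subseteq> {y. inner y x \<le> rho_star \<Omega> x}"
    by (rule closure_minimal)
  thus ?thesis using assms(3) by auto
qed

lemma rs_hom:
  assumes "bounded \<Omega>" "\<Omega> \<noteq> {}" "c > 0"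
  shows "rho_star \<Omega> (c *\<^sub>R x) = c * rho_star \<Omega> x"
proof (rule antisym)
  show "rho_star \<Omega> (c *\<^sub>R x) \<le> c * rho_star \<Omega> x"
    unfolding rho_star_def[of _ "c *\<^sub>R x"]
  proof (rule cSUP_least[OF assms(2)])
    fix y assume "y \<in> \<Omega>"
    have "inner y x \<le> rho_star \<Omega> x" using rs_upper[OF assms(1,2)] \<open>y \<in> \<Omega>\<close> closure_subset by blast
    thus "inner y (c *\<^sub>R x) \<le> c * rho_star \<Omega> x" using assms(3) by simp
  qed
  have "rho_star \<Omega> x \<le> rho_star \<Omega> (c *\<^sub>R x) / c"
    unfolding rho_star_def[of _ x]
  proof (rule cSUP_least[OF assms(2)])
    fix y assume "y \<in> \<Omega>"
    have "inner y (c *\<^sub>R x) \<le> rho_star \<Omega> (c *\<^sub>R x)" using rs_upper[OF assms(1,2)] \<open>y \<in> \<Omega>\<close> closure_subset by blast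
    thus "inner y x \<le> rho_star \<Omega> (c *\<^sub>R x) / c" using assms(3) by (simp add: field_simps)
  qed
  thus "c * rho_star \<Omega> x \<le> rho_star \<Omega> (c *\<^sub>R x)" using assms(3) by (simp add: field_simps)
qed

lemma rs_ge:
  assumes "bounded \<Omega>" "cball 0 \<rho>0 \<subseteq> \<Omega>" "\<rho>0 > 0"
  shows "\<rho>0 * norm x \<le> rho_star \<Omega> x"
proof (cases "x = 0")
  case True
  have "0 \<in> \<Omega>" using assms by auto
  hence "inner 0 x \<le> rho_star \<Omega> x" using rs_upper[OF assms(1)] closure_subset by blast
  thus ?thesis using True by simp
next
  case False
  define y where "y = (\<rho>0 / norm x) *\<^sub>R x"
  have "y \<in> \<Omega>" using assms(2,3) False by (auto simp: y_def)
  hence "inner y x \<le> rho_star \<Omega> x" using rs_upper[OF assms(1)] closure_subset by blast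
  moreover have "inner y x = \<rho>0 * norm x" using False
    by (simp add: y_def power2_norm_eq_inner[symmetric] power2_eq_square)
  ultimately show ?thesis by simp
qed

lemma rs_le:
  assumes "\<Omega> \<subseteq> cball 0 \<rho>1" "\<Omega> \<noteq> {}"
  shows "rho_star \<Omega> x \<le> \<rho>1 * norm x"
  unfolding rho_star_def
proof (rule cSUP_least[OF assms(2)])
  fix y assume "y \<in> \<Omega>"
  have "inner y x \<le> norm y * norm x" by (simp add: norm_cauchy_schwarz)
  also have "\<dots> \<le> \<rho>1 * norm x" using assms(1) \<open>y \<in> \<Omega>\<close> by (intro mult_right_mono) auto
  finally show "inner y x \<le> \<rho>1 * norm x" .
qed



lemma interval_sum:
  fixes t lo hi :: "'a \<Rightarrow> real"
  assumes "finite P" "\<forall>x\<in>P. A \<le> lo x \<and> lo x \<le> hi x \<and> hi x \<le> B"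
    "\<forall>x\<in>P. \<forall>y\<in>P. t x < t y \<longrightarrow> hi x \<le> lo y + \<epsilon>"
    "inj_on t P" "A \<le> B" "0 \<le> \<epsilon>"
  shows "(\<Sum>x\<in>P. hi x - lo x) \<le> B - A + \<epsilon> * card P"
  using assms
proof (induction "card P" arbitrary: P B)
  case 0
  then show ?case by simp
next
  case (Suc n)
  hence "P \<noteq> {}" by auto
  obtain m where m: "m \<in> P" "\<forall>x\<in>P. t x \<le> t m"
    using Suc.prems(1) \<open>P \<noteq> {}\<close>
  proof -
    have "Max (t ` P) \<in> t ` P" using Suc.prems(1) \<open>P \<noteq> {}\<close> by (intro Max_in) auto
    then obtain m where "m \<in> P" "t m = Max (t ` P)" by auto
    moreover have "\<forall>x\<in>P. t x \<le> Max (t ` P)" using Suc.prems(1) by auto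
    ultimately show ?thesis using that by auto
  qed
  define P' where "P' = P - {m}"
  have cardP': "card P' = n" using Suc.hyps(2) m(1) Suc.prems(1) by (simp add: P'_def)
  have lt: "\<forall>x\<in>P'. t x < t m"
    using m Suc.prems(4) unfolding P'_def inj_on_def by (metis DiffE insertI1 order_le_less)
  have IH: "(\<Sum>x\<in>P'. hi x - lo x) \<le> (lo m + \<epsilon>) - A + \<epsilon> * card P'"
  proof (rule Suc.hyps(1))
    show "n = card P'" using cardP' by simp
    show "finite P'" using Suc.prems(1) by (simp add: P'_def)
    show "\<forall>x\<in>P'. A \<le> lo x \<and> lo x \<le> hi x \<and> hi x \<le> lo m + \<epsilon>"
      using Suc.prems(2,3) lt m(1) unfolding P'_def by fastforce
    show "\<forall>x\<in>P'. \<forall>y\<in>P'. t x < t y \<longrightarrow> hi x \<le> lo y + \<epsilon>"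
      using Suc.prems(3) unfolding P'_def by blast
    show "inj_on t P'" using Suc.prems(4) unfolding P'_def by (rule inj_on_subset) auto
    show "A \<le> lo m + \<epsilon>" using Suc.prems(2,6) m(1) by fastforce
    show "0 \<le> \<epsilon>" by fact
  qed
  have "(\<Sum>x\<in>P. hi x - lo x) = (hi m - lo m) + (\<Sum>x\<in>P'. hi x - lo x)"
    unfolding P'_def using Suc.prems(1) m(1) by (simp add: sum.remove)
  also have "\<dots> \<le> (hi m - lo m) + ((lo m + \<epsilon>) - A + \<epsilon> * card P')" using IH by simp
  also have "\<dots> \<le> B - A + \<epsilon> * card P"
  proof -
    have "card P = Suc (card P')" using cardP' Suc.hyps(2) by simp
    moreover have "hi m \<le> B" using Suc.prems(2) m(1) by blast
    ultimately show ?thesis by (simp add: algebra_simps)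
  qed
  finally show ?case .
qed



lemma seg_comb: "(1-x) *\<^sub>R (M - c *\<^sub>R v) + x *\<^sub>R (M + c *\<^sub>R v) = M + ((2*x-1)*c) *\<^sub>R (v::'a::real_vector)"
proof -
  have "(1-x) *\<^sub>R (M - c *\<^sub>R v) + x *\<^sub>R (M + c *\<^sub>R v) = ((1-x) + x) *\<^sub>R M + (x*c - (1-x)*c) *\<^sub>R v"
    by (simp only: scaleR_add_left scaleR_diff_left scaleR_add_right scaleR_diff_right scaleR_scaleR) (simp add: algebra_simps)
  also have "\<dots> = M + ((2*x-1)*c) *\<^sub>R v" by (simp add: algebra_simps)
  finally show ?thesis .
qed

lemma half: "(a + b) /\<^sub>R 2 = a + (1/2) *\<^sub>R (b - a::'a::real_vector)"
proof -
  have "a = (1/2) *\<^sub>R a + (1/2) *\<^sub>R a" by (simp add: scaleR_add_left[symmetric])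
  hence "a + (1/2) *\<^sub>R (b - a) = (1/2) *\<^sub>R a + (1/2) *\<^sub>R b"
    by (simp add: scaleR_diff_right algebra_simps)
  thus ?thesis by (simp add: scaleR_add_right)
qed

lemma dilate9_mem:
  assumes "a \<noteq> b" "-4 * norm (b - a) \<le> s" "s \<le> 5 * norm (b - a)"
  shows "a + s *\<^sub>R ((1 / norm (b - a)) *\<^sub>R (b - a)) \<in> dilate9 a b"
proof -
  define L where "L = norm (b - a)"
  have L: "L > 0" using assms(1) by (simp add: L_def)
  define lam where "lam = (s / L + 4) / 9"
  have lam: "0 \<le> lam" "lam \<le> 1" using assms(2,3) L by (auto simp: lam_def L_def field_simps)
  have e1: "(1 - lam) *\<^sub>R ((a + b) /\<^sub>R 2 - (9/2) *\<^sub>R (b - a)) + lam *\<^sub>R ((a + b) /\<^sub>R 2 + (9/2) *\<^sub>R (b - a))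
     = (a + b) /\<^sub>R 2 + ((2*lam - 1)*(9/2)) *\<^sub>R (b - a)" by (rule seg_comb)
  have e2: "(a + b) /\<^sub>R 2 = a + (1/2) *\<^sub>R (b - a)" by (rule half)
  have e3: "1/2 + (2*lam - 1)*(9/2) = s / L" using L by (simp add: lam_def field_simps)
  have "a + s *\<^sub>R ((1 / L) *\<^sub>R (b - a)) = a + (s / L) *\<^sub>R (b - a)" by simp
  also have "\<dots> = a + (1/2) *\<^sub>R (b - a) + ((2*lam - 1)*(9/2)) *\<^sub>R (b - a)"
    unfolding e3[symmetric] by (simp add: scaleR_add_left)
  also have "\<dots> = (a + b) /\<^sub>R 2 + ((2*lam - 1)*(9/2)) *\<^sub>R (b - a)"
    unfolding e2 by simp
  also have "\<dots> = (1 - lam) *\<^sub>R ((a + b) /\<^sub>R 2 - (9/2) *\<^sub>R (b - a)) + lam *\<^sub>R ((a + b) /\<^sub>R 2 + (9/2) *\<^sub>R (b - a))"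
    by (rule e1[symmetric])
  finally have "a + s *\<^sub>R ((1 / L) *\<^sub>R (b - a)) =
     (1 - lam) *\<^sub>R ((a + b) /\<^sub>R 2 - (9/2) *\<^sub>R (b - a)) + lam *\<^sub>R ((a + b) /\<^sub>R 2 + (9/2) *\<^sub>R (b - a))" .
  thus ?thesis unfolding dilate9_def closed_segment_def L_def using lam by blast
qed

lemma seg_param:
  assumes "l \<in> closed_segment a b" "a \<noteq> b"
  defines "u \<equiv> (1 / norm (b - a)) *\<^sub>R (b - a)"
  shows "l = a + inner (l - a) u *\<^sub>R u \<and> 0 \<le> inner (l - a) u \<and> inner (l - a) u \<le> norm (b - a)"
proof -
  obtain lam where lam: "0 \<le> lam" "lam \<le> 1" "l = (1 - lam) *\<^sub>R a + lam *\<^sub>R b"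
    using assms(1) unfolding closed_segment_def by blast
  have L: "norm (b - a) > 0" using assms(2) by simp
  have uu: "inner u u = 1" using L by (simp add: u_def power2_norm_eq_inner[symmetric] power2_eq_square)
  have la: "l - a = (lam * norm (b - a)) *\<^sub>R u" using L by (simp add: lam(3) u_def algebra_simps)
  have t: "inner (l - a) u = lam * norm (b - a)" using uu by (simp add: la)
  show ?thesis using la t lam L by (auto simp: algebra_simps mult_le_cancel_right1)
qed



lemma min_le_sq:
  fixes x y P :: real
  assumes "0 \<le> x" "0 \<le> y" "x * y \<le> P^2" "0 \<le> P"
  shows "min x y \<le> P"
proof (rule ccontr)
  assume "\<not> min x y \<le> P"
  hence "P < x" "P < y" by auto
  hence "P * P < x * y" using assms(4) by (intro mult_strict_mono) auto
  thus False using assms(3) by (simp add: power2_eq_square)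
qed

lemma div_anti: "0 < (X::real) \<Longrightarrow> X \<le> Z \<Longrightarrow> 0 \<le> c \<Longrightarrow> c / Z \<le> c / X"
proof -
  assume a: "0 < X" "X \<le> Z" "0 \<le> c"
  have "0 < Z * X" using a by (intro mult_pos_pos) auto
  thus ?thesis using a by (intro divide_left_mono) auto
qed

lemma T1:
  fixes qR qr qh d N L m :: real
  assumes pos: "0<qR" "0<qr" "0<qh" "1 \<le> d" "10 \<le> N"
   and L: "(N-1)*d \<le> L" and m: "m \<le> N*(qh/qR) + 2" "0 \<le> m"
  shows "qR*qr*(m/(qh^2*L)) \<le> (10/9)*(qr/qh/d + 2*(qR*qr/(qh^2*d))/N)"
proof -
  have "(9/10)*N*d \<le> (N-1)*d" using pos by (intro mult_right_mono) auto
  hence hL: "(9/10)*N*d \<le> L" using L by linarith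
  have Lp: "0 < (9/10)*N*d" using pos by simp
  have "m/(qh^2*L) \<le> m/(qh^2*((9/10)*N*d))"
  proof -
    have "0 < qh^2*((9/10)*N*d)" using Lp pos by simp
    moreover have "qh^2*((9/10)*N*d) \<le> qh^2*L" using hL by (intro mult_left_mono) auto
    ultimately show ?thesis using m(2) by (intro div_anti) auto
  qed
  also have "\<dots> \<le> (N*(qh/qR) + 2)/(qh^2*((9/10)*N*d))"
    using m Lp pos by (intro divide_right_mono) auto
  finally have "qR*qr*(m/(qh^2*L)) \<le> qR*qr*((N*(qh/qR) + 2)/(qh^2*((9/10)*N*d)))"
    using pos by (intro mult_left_mono) auto
  also have "\<dots> = (10/9)*(qr/qh/d + 2*(qR*qr/(qh^2*d))/N)"
    using pos by (simp add: field_simps power2_eq_square)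
  finally show ?thesis .
qed

lemma T2:
  fixes qR qr qh d N m :: real
  assumes pos: "0<qR" "0<qr" "0<qh" "1 \<le> d" "10 \<le> N"
   and m: "N*(qh/qR) \<le> m - 1"
  shows "qR*qr*(2/(qR^2*((m-1)*d))*N) \<le> 2*(qr/qh/d)"
proof -
  have q: "0 < N*(qh/qR)" using pos by simp
  have "2/(qR^2*((m-1)*d)) \<le> 2/(qR^2*((N*(qh/qR))*d))"
  proof -
    define X where "X = qR^2*((N*(qh/qR))*d)"
    define Z where "Z = qR^2*((m-1)*d)"
    have X: "0 < X" using q pos unfolding X_def by (intro mult_pos_pos) auto
    have XZ: "X \<le> Z" using m pos unfolding X_def Z_def by (intro mult_left_mono mult_right_mono) auto
    have "0 < Z * X" using X XZ by (intro mult_pos_pos) auto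
    hence "2 / Z \<le> 2 / X" using XZ by (intro divide_left_mono) auto
    thus ?thesis unfolding X_def Z_def .
  qed
  hence "qR*qr*(2/(qR^2*((m-1)*d))*N) \<le> qR*qr*(2/(qR^2*((N*(qh/qR))*d))*N)"
    using pos by (intro mult_left_mono mult_right_mono) auto
  also have "\<dots> = 2*(qr/qh/d)" using pos by (simp add: field_simps power2_eq_square)
  finally show ?thesis .
qed

lemma large_arith:
  fixes qR qr qh d N L c1 K2 S m Y :: real
  assumes pos: "0<qR" "0<qr" "0<qh" "1 \<le> d" "10 \<le> N" "0 \<le> c1" "0 \<le> K2"
   and L: "(N-1)*d \<le> L"
   and m: "N*(qh/qR) \<le> m - 1" "m \<le> N*(qh/qR) + 2"
   and S1: "S \<le> qR*qr*c1*(m/(qh^2*L) + 2/(qR^2*((m-1)*d))*N)"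
   and S2: "S \<le> K2*N"
   and Y: "0 \<le> Y" "Y^2 = qR*qr/(qh^2*d)" "qr/qh/d \<le> Y"
  shows "S \<le> (4*c1 + sqrt(3*c1*K2))*Y"
proof -
  have m0: "0 \<le> m" using m pos by (smt (verit) divide_pos_pos mult_pos_pos)
  note t1 = T1[OF pos(1-5) L m(2) m0]
  note t2 = T2[OF pos(1-5) m(1)]
  have "S \<le> c1 * (qR*qr*(m/(qh^2*L)) + qR*qr*(2/(qR^2*((m-1)*d))*N))"
    using S1 by (simp add: algebra_simps)
  also have "\<dots> \<le> c1 * ((10/9)*(qr/qh/d + 2*(qR*qr/(qh^2*d))/N) + 2*(qr/qh/d))"
    using t1 t2 pos by (intro mult_left_mono add_mono) auto
  also have "\<dots> = c1 * (28/9) * (qr/qh/d) + (20/9) * c1 * Y^2 / N"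
    using Y(2) by (simp add: algebra_simps)
  also have "\<dots> \<le> c1 * 4 * Y + (20/9) * c1 * Y^2 / N"
  proof -
    have "c1 * (28/9) * (qr/qh/d) \<le> c1 * 4 * Y" using Y(3) pos Y(1) by (intro mult_mono) auto
    thus ?thesis by simp
  qed
  finally have S1': "S \<le> c1 * 4 * Y + (20/9) * c1 * Y^2 / N" .
  have mn: "min (K2*N) ((20/9) * c1 * Y^2 / N) \<le> sqrt(3*c1*K2)*Y"
  proof (rule min_le_sq)
    show "0 \<le> K2*N" using pos by simp
    show "0 \<le> (20/9) * c1 * Y^2 / N" using pos by simp
    have "K2*N * ((20/9) * c1 * Y^2 / N) = (20/9) * c1 * K2 * Y^2" using pos by (simp add: field_simps)
    also have "\<dots> \<le> 3 * c1 * K2 * Y^2" using pos by (intro mult_right_mono) auto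
    also have "\<dots> = (sqrt(3*c1*K2)*Y)^2" using pos by (simp add: power_mult_distrib)
    finally show "K2*N * ((20/9) * c1 * Y^2 / N) \<le> (sqrt(3*c1*K2)*Y)^2" .
    show "0 \<le> sqrt(3*c1*K2)*Y" using pos Y by simp
  qed
  have "0 \<le> c1 * 4 * Y" using pos Y by simp
  hence "S \<le> c1 * 4 * Y + sqrt(3*c1*K2)*Y" using S1' S2 mn by (smt (verit))
  thus ?thesis by (simp add: algebra_simps)
qed

lemma small_arith:
  fixes qR qr qh d N L \<rho>0 K2 S Y H0 :: real
  assumes pos: "0<qR" "0<qr" "1 \<le> qh" "1 \<le> d" "10 \<le> N" "0 < \<rho>0" "0 \<le> K2" "0 \<le> Y"
   and H: "qh^2 < H0" "qr \<le> qR" "qR \<le> qh^2" "10 \<le> qr^2"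
   and N: "N \<le> L / d + 1" "L \<le> 2 * (qr^2 + 1) / \<rho>0"
   and S: "S \<le> K2 * N" and Y: "qr / qh / d \<le> Y"
  shows "S \<le> K2 * (3 * H0^2 / \<rho>0) * Y"
proof -
  have dp: "0 < d" using pos by simp
  have H0p: "0 \<le> H0" using H by (smt (verit) zero_le_power2)
  have "9 \<le> L / d" using N pos by linarith
  hence "N \<le> (10/9) * (L / d)" using N by linarith
  also have "\<dots> \<le> (10/9) * ((2 * (qr^2 + 1) / \<rho>0) / d)"
    using N(2) dp by (intro mult_left_mono divide_right_mono) auto
  also have "\<dots> \<le> (10/9) * ((2 * (1.1 * qr^2) / \<rho>0) / d)"
    using H(4) dp pos by (intro mult_left_mono divide_right_mono) auto
  also have "\<dots> = (22/9) * qr * (qr / (\<rho>0 * d))" by (simp add: field_simps power2_eq_square)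
  also have "\<dots> \<le> (22/9) * H0 * (qr / (\<rho>0 * d))"
  proof -
    have "qr \<le> H0" using H by linarith
    thus ?thesis using pos by (intro mult_right_mono mult_left_mono) auto
  qed
  also have "qr / (\<rho>0 * d) = qh * (qr / qh / d) / \<rho>0" using pos by (simp add: field_simps)
  also have "(22/9) * H0 * (qh * (qr / qh / d) / \<rho>0) \<le> (22/9) * H0 * (H0 * Y / \<rho>0)"
  proof -
    have "qh \<le> qh^2" using pos by (simp add: power2_eq_square)
    hence "qh \<le> H0" using H by linarith
    hence "qh * (qr / qh / d) \<le> H0 * Y" using Y pos by (intro mult_mono) auto
    hence "qh * (qr / qh / d) / \<rho>0 \<le> H0 * Y / \<rho>0" using pos by (intro divide_right_mono) auto
    moreover have "0 \<le> H0" using H by (smt (verit) zero_le_power2)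
    ultimately show ?thesis by (intro mult_left_mono) auto
  qed
  also have "\<dots> \<le> 3 * H0^2 / \<rho>0 * Y"
  proof -
    have "0 \<le> H0 * (H0 * Y / \<rho>0)" using H0p pos by simp
    hence "(22/9) * H0 * (H0 * Y / \<rho>0) \<le> 3 * (H0 * (H0 * Y / \<rho>0))" by linarith
    thus ?thesis by (simp add: field_simps power2_eq_square)
  qed
  finally have "N \<le> 3 * H0^2 / \<rho>0 * Y" .
  hence "K2 * N \<le> K2 * (3 * H0^2 / \<rho>0 * Y)" using pos by (intro mult_left_mono) auto
  thus ?thesis using S by (simp add: algebra_simps)
qed



lemma powr_cmp:
  fixes R r h d N :: real
  assumes pos: "0 < R" "0 < r" "0 < h" "0 < d" "0 < N"
    and T: "R powr (3/4) * d powr (1/2) * h powr (-1/2) * r powr (-1/4) \<le> N"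
  shows "(R * r / (h^2 * d^2)) powr (1/4) \<le> (r * N / (h * d^2)) powr (1/3)"
proof -
  have "ln (R powr (3/4) * d powr (1/2) * h powr (-1/2) * r powr (-1/4)) \<le> ln N"
    using T pos by (subst ln_le_cancel_iff) auto
  hence lT: "(3/4) * ln R + (1/2) * ln d - (1/2) * ln h - (1/4) * ln r \<le> ln N"
    using pos by (simp add: ln_mult ln_powr)
  have e1: "ln (R * r / (h^2 * d^2)) = ln R + ln r - 2 * ln h - 2 * ln d"
    using pos by (simp add: ln_mult ln_div ln_realpow)
  have e2: "ln (r * N / (h * d^2)) = ln r + ln N - ln h - 2 * ln d"
    using pos by (simp add: ln_mult ln_div ln_realpow)
  have "(1/4) * ln (R * r / (h^2 * d^2)) \<le> (1/3) * ln (r * N / (h * d^2))"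
    unfolding e1 e2 using lT by (simp only: right_diff_distrib distrib_left)
  thus ?thesis using pos by (simp add: powr_def)
qed



lemma pw: "0 < X \<Longrightarrow> (1 / X) powr (-1/2) = sqrt X"
  by (simp add: powr_minus_divide powr_half_sqrt[symmetric] powr_divide)

lemma vec_sub: "p = a + x *\<^sub>R w \<Longrightarrow> q = a + y *\<^sub>R w \<Longrightarrow> p - q = (x - y) *\<^sub>R (w::'a::real_vector)"
  by (simp add: scaleR_diff_left)

lemma vec_shift: "l = a + x *\<^sub>R w \<Longrightarrow> a + s *\<^sub>R w = l + (s - x) *\<^sub>R (w::'a::real_vector)"
  by (simp add: scaleR_diff_left)

locale segctx =
  fixes \<Omega> :: "(real^2) set" and \<rho>0 \<rho>1 K r R h :: real and a b :: "real^2"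
  assumes \<Omega>b: "bounded \<Omega>" and \<Omega>ne: "\<Omega> \<noteq> {}" and \<rho>0: "0 < \<rho>0" "cball 0 \<rho>0 \<subseteq> \<Omega>"
    and \<rho>1: "1 \<le> \<rho>1" "\<Omega> \<subseteq> cball 0 \<rho>1"
    and Kp: "0 \<le> K" "\<forall>\<theta>. norm \<theta> = 1 \<longrightarrow> (\<forall>\<delta>>0. \<delta> powr (-1/2) * mu \<Omega> \<theta> \<delta> \<le> K)"
    and rR: "10 \<le> r" "r \<le> R" "sqrt R \<le> h" "h \<le> R"
    and ab: "a \<in> Z2" "b \<in> Z2" "card (closed_segment a b \<inter> Z2) \<ge> 10" "dilate9 a b \<subseteq> annulus \<Omega> r h"

context segctx
begin

abbreviation "JJ \<equiv> closed_segment a b \<inter> Z2"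
abbreviation "NN \<equiv> card JJ"
abbreviation "dd \<equiv> lattice_gap JJ"
abbreviation "LL \<equiv> norm (b - a)"
definition "uu = (1 / norm (b - a)) *\<^sub>R (b - a)"
abbreviation "tp l \<equiv> inner (l - a) uu"
abbreviation "thv (l::real^2) \<equiv> (1 / norm l) *\<^sub>R l"
abbreviation "dlt (l::real^2) \<equiv> 1 / (R * norm l)"
definition "Ch l = {x \<in> frontier \<Omega>. inner x (thv l) = rho_star \<Omega> (thv l) - dlt l}"

lemma finJ: "finite JJ"
proof (rule ccontr)
  assume "infinite JJ"
  hence "NN = 0" by simp
  thus False using ab(3) by simp
qed

lemma ab_ne: "a \<noteq> b"
proof
  assume "a = b"
  hence "JJ \<subseteq> {a}" by auto
  hence "NN \<le> card {a}" by (intro card_mono) auto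
  hence "NN \<le> 1" by simp
  thus False using ab(3) by simp
qed

lemma aJ: "a \<in> JJ" and bJ: "b \<in> JJ" using ab(1,2) by auto

lemma L1: "1 \<le> LL"
  using Z2_dist[OF ab(2,1)] ab_ne by auto

lemma unorm: "norm uu = 1" using ab_ne by (simp add: uu_def)

lemma par: "l \<in> JJ \<Longrightarrow> l = a + tp l *\<^sub>R uu \<and> 0 \<le> tp l \<and> tp l \<le> LL"
  using seg_param[OF _ ab_ne, of l] unfolding uu_def by auto

lemma dist_tp: "p \<in> JJ \<Longrightarrow> q \<in> JJ \<Longrightarrow> dist p q = \<bar>tp p - tp q\<bar>"
proof -
  assume p: "p \<in> JJ" and q: "q \<in> JJ"
  have "p - q = (tp p - tp q) *\<^sub>R uu"
    using vec_sub[OF conjunct1[OF par[OF p]] conjunct1[OF par[OF q]]] .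
  thus ?thesis using unorm by (simp add: dist_norm)
qed

lemma gapset: "{dist p q | p q. p \<in> JJ \<and> q \<in> JJ \<and> p \<noteq> q} \<noteq> {}"
  using aJ bJ ab_ne by blast

lemma d_le: "p \<in> JJ \<Longrightarrow> q \<in> JJ \<Longrightarrow> p \<noteq> q \<Longrightarrow> dd \<le> dist p q"
  unfolding lattice_gap_def
  by (rule cInf_lower) (auto intro: bdd_belowI[where m=0])

lemma d_ge1: "1 \<le> dd"
  unfolding lattice_gap_def
proof (rule cInf_greatest[OF gapset])
  fix x assume "x \<in> {dist p q | p q. p \<in> JJ \<and> q \<in> JJ \<and> p \<noteq> q}"
  then obtain p q where "x = dist p q" "p \<in> Z2" "q \<in> Z2" "p \<noteq> q" by auto
  thus "1 \<le> x" using Z2_dist[of p q] by (simp add: dist_norm)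
qed

lemma h1: "1 \<le> h"
proof -
  have "1 \<le> sqrt R" using rR by simp
  thus ?thesis using rR by linarith
qed

lemma ann: "-4 * LL \<le> s \<Longrightarrow> s \<le> 5 * LL \<Longrightarrow>
    r \<le> rho_star \<Omega> (a + s *\<^sub>R uu) \<and> rho_star \<Omega> (a + s *\<^sub>R uu) \<le> r + 1 / h"
  using dilate9_mem[OF ab_ne, of s] ab(4) unfolding annulus_def uu_def by blast

lemma annJ: "l \<in> JJ \<Longrightarrow> r \<le> rho_star \<Omega> l \<and> rho_star \<Omega> l \<le> r + 1 / h"
proof -
  assume l: "l \<in> JJ"
  have "-4 * LL \<le> tp l" "tp l \<le> 5 * LL" using par[OF l] by auto
  from ann[OF this] show ?thesis using par[OF l] by metis
qed

lemma normJ: "l \<in> JJ \<Longrightarrow> r / \<rho>1 \<le> norm l \<and> norm l \<le> (r + 1) / \<rho>0"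
proof -
  assume l: "l \<in> JJ"
  have "r \<le> \<rho>1 * norm l" using annJ[OF l] rs_le[OF \<rho>1(2) \<Omega>ne, of l] by linarith
  hence A: "r / \<rho>1 \<le> norm l" using \<rho>1 by (simp add: field_simps)
  have "1 / h \<le> 1" using h1 by simp
  hence "\<rho>0 * norm l \<le> r + 1" using annJ[OF l] rs_ge[OF \<Omega>b \<rho>0(2) \<rho>0(1), of l] by linarith
  hence B: "norm l \<le> (r + 1) / \<rho>0" using \<rho>0 by (simp add: field_simps)
  show ?thesis using A B by simp
qed

lemma lpos: "l \<in> JJ \<Longrightarrow> 0 < norm l"
proof -
  assume "l \<in> JJ"
  hence "r / \<rho>1 \<le> norm l" using normJ by blast
  moreover have "0 < r / \<rho>1" using rR \<rho>1 by simp
  ultimately show ?thesis by linarith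
qed

lemma Rpos: "0 < R" using rR by linarith

lemma closure_ball: "closure \<Omega> \<subseteq> cball 0 \<rho>1"
  using \<rho>1(2) by (rule closure_minimal) simp

lemma chord:
  assumes l: "l \<in> JJ" and p: "p \<in> Ch l"
  shows "inner p l = rho_star \<Omega> l - 1 / R" "norm p \<le> \<rho>1" "\<And>y. inner p y \<le> rho_star \<Omega> y"
proof -
  have pc: "p \<in> closure \<Omega>" using p frontier_def Ch_def by auto
  show "norm p \<le> \<rho>1" using pc closure_ball by auto
  show "\<And>y. inner p y \<le> rho_star \<Omega> y" using rs_upper[OF \<Omega>b \<Omega>ne pc] .
  have n: "0 < norm l" using lpos[OF l] .
  have lt: "l = norm l *\<^sub>R thv l" using n by simp
  have hom: "rho_star \<Omega> l = norm l * rho_star \<Omega> (thv l)"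
    using rs_hom[OF \<Omega>b \<Omega>ne n, of "thv l"] lt by metis
  have "inner p l = norm l * inner p (thv l)" using n by simp
  also have "\<dots> = norm l * (rho_star \<Omega> (thv l) - dlt l)" using p unfolding Ch_def by simp
  also have "\<dots> = rho_star \<Omega> l - 1 / R" using n Rpos hom by (simp add: field_simps)
  finally show "inner p l = rho_star \<Omega> l - 1 / R" .
qed

lemma line_ineq:
  assumes l: "l \<in> JJ" and p: "p \<in> Ch l" and s: "-4 * LL \<le> s" "s \<le> 5 * LL"
  shows "rho_star \<Omega> l - 1 / R + (s - tp l) * inner p uu \<le> rho_star \<Omega> (a + s *\<^sub>R uu)"
proof -
  have "a + s *\<^sub>R uu = l + (s - tp l) *\<^sub>R uu" using vec_shift[OF conjunct1[OF par[OF l]]] .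
  hence "inner p (a + s *\<^sub>R uu) = inner p l + (s - tp l) * inner p uu"
    by (simp add: inner_add_right)
  thus ?thesis using chord[OF l p] by metis
qed

lemma slope:
  assumes l: "l \<in> JJ" and p: "p \<in> Ch l"
  shows "\<bar>inner p uu\<bar> \<le> 1 / (2 * h * LL)"
proof -
  have t: "0 \<le> tp l" "tp l \<le> LL" using par[OF l] by auto
  have L: "0 < LL" using L1 by linarith
  have hR: "1 / R \<le> 1 / h" using rR h1 by (simp add: frac_le)
  have A: "rho_star \<Omega> l - 1 / R + (4 * LL) * inner p uu \<le> r + 1 / h"
    using line_ineq[OF l p, of "tp l + 4 * LL"] ann[of "tp l + 4 * LL"] t by auto
  have B: "rho_star \<Omega> l - 1 / R + (- 4 * LL) * inner p uu \<le> r + 1 / h"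
    using line_ineq[OF l p, of "tp l - 4 * LL"] ann[of "tp l - 4 * LL"] t L by auto
  have "4 * LL * inner p uu \<le> 2 / h" using A annJ[OF l] hR by linarith
  moreover have "- (4 * LL * inner p uu) \<le> 2 / h" using B annJ[OF l] hR by linarith
  ultimately have "4 * LL * \<bar>inner p uu\<bar> \<le> 2 / h" by (simp add: abs_if)
  thus ?thesis using L h1 by (simp add: field_simps)
qed

lemma pair:
  assumes l: "l \<in> JJ" and p: "p \<in> Ch l" and l': "l' \<in> JJ" and q: "q \<in> Ch l'"
  shows "(tp l' - tp l) * (inner p uu - inner q uu) \<le> 2 / R"
proof -
  have t: "0 \<le> tp l" "tp l \<le> LL" "0 \<le> tp l'" "tp l' \<le> LL" using par[OF l] par[OF l'] by auto
  have A: "rho_star \<Omega> l - 1 / R + (tp l' - tp l) * inner p uu \<le> rho_star \<Omega> l'"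
    using line_ineq[OF l p, of "tp l'"] t par[OF l'] by auto
  have B: "rho_star \<Omega> l' - 1 / R + (tp l - tp l') * inner q uu \<le> rho_star \<Omega> l"
    using line_ineq[OF l' q, of "tp l"] t par[OF l] by auto
  show ?thesis using A B by (simp add: algebra_simps)
qed

end


context segctx
begin

abbreviation "muv l \<equiv> mu \<Omega> (thv l) (dlt l)"

lemma Ch_sub: "Ch l \<subseteq> cball 0 \<rho>1"
  using closure_ball frontier_def Ch_def by auto

lemma mu_Ch: "muv l = diameter (Ch l)" by (simp add: mu_def Ch_def)

lemma mu_nonneg: "0 \<le> muv l"
proof -
  have "bounded (Ch l)" using Ch_sub bounded_cball bounded_subset by blast
  thus ?thesis unfolding mu_Ch by (rule diameter_ge_0)
qed

lemma crude: assumes l: "l \<in> JJ" shows "sqrt (R * r) * muv l \<le> K * sqrt \<rho>1"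
proof -
  have n: "0 < norm l" using lpos[OF l] .
  have th: "norm (thv l) = 1" using n by simp
  have dp: "0 < dlt l" using n Rpos by simp
  have "dlt l powr (-1/2) * muv l \<le> K" using Kp(2) th dp by blast
  moreover have "dlt l powr (-1/2) = sqrt (R * norm l)" using pw[of "R * norm l"] n Rpos by simp
  ultimately have A: "sqrt (R * norm l) * muv l \<le> K" by simp
  have A0: "0 \<le> sqrt (R * norm l) * muv l" using mu_nonneg[of l] n Rpos by simp
  have "r / norm l \<le> \<rho>1" using normJ[OF l] n \<rho>1 by (simp add: field_simps)
  hence B: "sqrt (r / norm l) \<le> sqrt \<rho>1" by simp
  have "sqrt (R * r) * muv l = sqrt (r / norm l) * (sqrt (R * norm l) * muv l)"
    using n Rpos rR by (simp add: real_sqrt_mult[symmetric] real_sqrt_divide field_simps)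
  also have "\<dots> \<le> sqrt \<rho>1 * K"
    using A B A0 Kp(1) \<rho>1 by (intro mult_mono) auto
  finally show ?thesis by (simp add: mult.commute)
qed

lemma crude_sum: "sqrt (R * r) * (\<Sum>l\<in>JJ. muv l) \<le> K * sqrt \<rho>1 * NN"
proof -
  have "sqrt (R * r) * (\<Sum>l\<in>JJ. muv l) = (\<Sum>l\<in>JJ. sqrt (R * r) * muv l)" by (simp add: sum_distrib_left)
  also have "\<dots> \<le> (\<Sum>l\<in>JJ. K * sqrt \<rho>1)" by (rule sum_mono) (rule crude)
  finally show ?thesis by (simp add: mult.commute)
qed

abbreviation "sl l \<equiv> (\<lambda>p. inner p uu) ` Ch l"

lemma sl_abs: assumes "l \<in> JJ" "y \<in> sl l" shows "\<bar>y\<bar> \<le> 1 / (2 * h * LL)"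
proof -
  obtain p where "p \<in> Ch l" "y = inner p uu" using assms(2) by blast
  thus ?thesis using slope[OF assms(1)] by blast
qed

lemma sl_bdd: assumes "l \<in> JJ" shows "bdd_above (sl l)" "bdd_below (sl l)"
proof -
  have *: "\<And>y. y \<in> sl l \<Longrightarrow> y \<le> 1 / (2 * h * LL) \<and> - (1 / (2 * h * LL)) \<le> y"
    using sl_abs[OF assms] by (metis abs_le_iff minus_le_iff)
  show "bdd_above (sl l)" using * by (intro bdd_aboveI) blast
  show "bdd_below (sl l)" using * by (intro bdd_belowI) blast
qed

lemma sl_range: assumes "l \<in> JJ" "Ch l \<noteq> {}"
  shows "- (1 / (2 * h * LL)) \<le> Inf (sl l)" "Inf (sl l) \<le> Sup (sl l)" "Sup (sl l) \<le> 1 / (2 * h * LL)"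
proof -
  obtain p where p: "p \<in> Ch l" using assms(2) by blast
  have ne: "sl l \<noteq> {}" using p by blast
  have "\<And>y. y \<in> sl l \<Longrightarrow> y \<le> 1 / (2 * h * LL) \<and> - (1 / (2 * h * LL)) \<le> y"
    using sl_abs[OF assms(1)] by (metis abs_le_iff minus_le_iff)
  thus "- (1 / (2 * h * LL)) \<le> Inf (sl l)" "Sup (sl l) \<le> 1 / (2 * h * LL)"
    using ne by (auto intro: cInf_greatest cSup_least)
  have "Inf (sl l) \<le> inner p uu" using sl_bdd[OF assms(1)] p by (intro cInf_lower) auto
  also have "\<dots> \<le> Sup (sl l)" using sl_bdd[OF assms(1)] p by (intro cSup_upper) auto
  finally show "Inf (sl l) \<le> Sup (sl l)" .
qed

lemma det_bound:
  assumes hl: "4 / \<rho>0 \<le> h" and l: "l \<in> JJ" and p: "p \<in> Ch l"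
  shows "r / (2 * \<rho>1) \<le> \<bar>det2 a uu\<bar>"
proof -
  have L: "1 \<le> LL" by (rule L1)
  have dl: "det2 l uu = det2 a uu" using par[OF l] det2_shift by metis
  have id: "inner p l = inner p uu * inner l uu + det2 a uu * det2 p uu"
    using ident1[OF unorm, of p l] dl by simp
  have i1: "inner p l \<ge> r - 1/10"
  proof -
    have "1 / R \<le> 1 / 10" using rR by (simp add: frac_le)
    thus ?thesis using chord(1)[OF l p] annJ[OF l] by linarith
  qed
  have s1: "\<bar>inner p uu\<bar> \<le> \<rho>0 / 8"
  proof -
    have "\<bar>inner p uu\<bar> \<le> 1 / (2 * h * LL)" by (rule slope[OF l p])
    also have "\<dots> \<le> 1 / (2 * (4 / \<rho>0) * 1)"
      using hl L \<rho>0 h1 by (intro divide_left_mono mult_mono mult_pos_pos) auto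
    also have "\<dots> = \<rho>0 / 8" by simp
    finally show ?thesis .
  qed
  have s2: "\<bar>inner l uu\<bar> \<le> (r + 1) / \<rho>0"
    using Cauchy_Schwarz_ineq2[of l uu] unorm normJ[OF l] by simp
  have "\<bar>inner p uu * inner l uu\<bar> \<le> (\<rho>0 / 8) * ((r + 1) / \<rho>0)"
    unfolding abs_mult using s1 s2 by (intro mult_mono) auto
  also have "\<dots> = (r + 1) / 8" using \<rho>0 by simp
  finally have t1: "\<bar>inner p uu * inner l uu\<bar> \<le> (r + 1) / 8" .
  have "(det2 p uu)^2 \<le> (norm p)^2" using ident2[OF unorm, of p] by simp
  hence "\<bar>det2 p uu\<bar> \<le> norm p" using real_sqrt_le_mono by fastforce
  hence dp: "\<bar>det2 p uu\<bar> \<le> \<rho>1" using chord(2)[OF l p] by linarith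
  have "\<bar>det2 a uu * det2 p uu\<bar> \<le> \<bar>det2 a uu\<bar> * \<rho>1"
    unfolding abs_mult using dp by (intro mult_left_mono) auto
  hence "r - 1/10 \<le> (r + 1) / 8 + \<bar>det2 a uu\<bar> * \<rho>1" using id i1 t1 by linarith
  hence "r / 2 \<le> \<bar>det2 a uu\<bar> * \<rho>1" using rR(1) add_divide_distrib[of r 1 8] by linarith
  thus ?thesis using \<rho>1 by (simp add: field_simps)
qed

lemma width:
  assumes hl: "4 / \<rho>0 \<le> h" and l: "l \<in> JJ" and ne: "Ch l \<noteq> {}"
  shows "muv l \<le> (3 * \<rho>1 / \<rho>0) * (Sup (sl l) - Inf (sl l))"
proof -
  obtain p0 where p0: "p0 \<in> Ch l" using ne by blast
  define D where "D = det2 a uu"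
  have Dp: "r / (2 * \<rho>1) \<le> \<bar>D\<bar>" using det_bound[OF hl l p0] by (simp add: D_def)
  have Dpos: "0 < \<bar>D\<bar>" using Dp rR \<rho>1 by (smt (verit) divide_pos_pos)
  have dl: "det2 l uu = D" using par[OF l] det2_shift unfolding D_def by metis
  have key: "norm (p - q) \<le> (3 * \<rho>1 / \<rho>0) * (Sup (sl l) - Inf (sl l))" if p: "p \<in> Ch l" and q: "q \<in> Ch l" for p q
  proof -
    define w where "w = p - q"
    have w0: "inner w l = 0" using chord(1)[OF l p] chord(1)[OF l q] by (simp add: w_def inner_diff_left)
    have e1: "0 = inner w uu * inner l uu + D * det2 w uu" using ident1[OF unorm, of w l] w0 dl by simp
    have e2: "(norm w)^2 = (inner w uu)^2 + (det2 w uu)^2" by (rule ident2[OF unorm])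
    have e3: "(norm l)^2 = (inner l uu)^2 + D^2" using ident2[OF unorm, of l] dl by simp
    have "(norm w)^2 * D^2 = (inner w uu)^2 * D^2 + (D * det2 w uu)^2" using e2 by (simp add: algebra_simps power2_eq_square)
    also have "(D * det2 w uu)^2 = (inner w uu * inner l uu)^2" using e1 by (simp add: power2_eq_square) (metis add.right_neutral add_uminus_conv_diff diff_0 minus_mult_minus eq_neg_iff_add_eq_0 e1)
    finally have "(norm w * \<bar>D\<bar>)^2 = (\<bar>inner w uu\<bar> * norm l)^2" using e3 by (simp add: power_mult_distrib algebra_simps)
    hence E: "norm w * \<bar>D\<bar> = \<bar>inner w uu\<bar> * norm l" by (simp add: power2_eq_iff_nonneg)
    have iw: "\<bar>inner w uu\<bar> \<le> Sup (sl l) - Inf (sl l)"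
    proof -
      have "inner p uu \<le> Sup (sl l)" "Inf (sl l) \<le> inner p uu"
           "inner q uu \<le> Sup (sl l)" "Inf (sl l) \<le> inner q uu"
        using sl_bdd[OF l] p q by (auto intro: cSup_upper cInf_lower)
      thus ?thesis by (simp add: w_def inner_diff_left abs_le_iff)
    qed
    have nl: "norm l \<le> (r + 1) / \<rho>0" using normJ[OF l] by simp
    have W0: "0 \<le> Sup (sl l) - Inf (sl l)" using sl_range[OF l ne] by simp
    have "norm w * \<bar>D\<bar> \<le> (Sup (sl l) - Inf (sl l)) * ((r + 1) / \<rho>0)"
      unfolding E using iw nl W0 by (intro mult_mono) auto
    also have "\<dots> \<le> (Sup (sl l) - Inf (sl l)) * ((3 * \<rho>1 / \<rho>0) * (r / (2 * \<rho>1)))"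
    proof -
      have "(r + 1) / \<rho>0 \<le> (3 * \<rho>1 / \<rho>0) * (r / (2 * \<rho>1))"
        using \<rho>0 \<rho>1 rR by (simp add: field_simps)
      thus ?thesis using W0 by (rule mult_left_mono)
    qed
    also have "\<dots> \<le> (Sup (sl l) - Inf (sl l)) * ((3 * \<rho>1 / \<rho>0) * \<bar>D\<bar>)"
      using W0 Dp \<rho>0 \<rho>1 by (intro mult_left_mono) auto
    finally have "norm w * \<bar>D\<bar> \<le> ((3 * \<rho>1 / \<rho>0) * (Sup (sl l) - Inf (sl l))) * \<bar>D\<bar>" by (simp add: algebra_simps)
    hence "norm w \<le> (3 * \<rho>1 / \<rho>0) * (Sup (sl l) - Inf (sl l))" using Dpos by (rule mult_right_le_imp_le)
    thus ?thesis by (simp add: w_def)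
  qed
  show ?thesis unfolding mu_Ch
    by (rule diameter_le) (use ne key in \<open>auto simp: dist_norm\<close>)
qed

end


lemma mod_gap_nat: "(i::nat) < j \<Longrightarrow> i mod m = j mod m \<Longrightarrow> i + m \<le> j"
proof -
  assume ij: "i < j" and md: "i mod m = j mod m"
  have "m dvd (j - i)" using mod_eq_dvd_iff_nat[of i j m] ij md by simp
  then obtain k where k: "j - i = m * k" by blast
  have "j - i > 0" using ij by simp
  hence "k \<noteq> 0" using k by (metis mult_0_right less_irrefl)
  hence "m \<le> m * k" by simp
  thus ?thesis using k ij by linarith
qed

lemma div_step: "0 < (d::real) \<Longrightarrow> d \<le> y - x \<Longrightarrow> x / d + 1 \<le> y / d"
proof -
  assume d: "0 < d" "d \<le> y - x"
  have "(x + d) / d \<le> y / d" using d by (intro divide_right_mono) auto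
  moreover have "(x + d) / d = x / d + 1" using d by (simp add: add_divide_distrib)
  ultimately show ?thesis by simp
qed

lemma div_step2: "0 < (d::real) \<Longrightarrow> x / d - 1 + m < y / d \<Longrightarrow> (m - 1) * d \<le> y - x"
proof -
  assume d: "0 < d" and h: "x / d - 1 + m < y / d"
  have "(x / d - 1 + m) * d < (y / d) * d" using h d by (rule mult_strict_right_mono)
  moreover have "(x / d - 1 + m) * d = x - d + m * d" using d by (simp add: algebra_simps)
  moreover have "(y / d) * d = y" using d by simp
  ultimately show ?thesis by (simp add: algebra_simps)
qed

lemma div_step3: "0 < (G::real) \<Longrightarrow> 0 < R \<Longrightarrow> G * z \<le> 2 / R \<Longrightarrow> z \<le> 2 / (R * G)"
  by (simp add: field_simps)

context segctx
begin

lemma dpos: "0 < dd" using d_ge1 by linarith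

lemma tp_sep: "l \<in> JJ \<Longrightarrow> l' \<in> JJ \<Longrightarrow> l \<noteq> l' \<Longrightarrow> dd \<le> \<bar>tp l - tp l'\<bar>"
  using d_le dist_tp by metis

lemma tp_inj: "inj_on tp JJ"
proof (rule inj_onI)
  fix x y assume "x \<in> JJ" "y \<in> JJ" "tp x = tp y"
  thus "x = y" using tp_sep[of x y] dpos by (metis abs_zero diff_self not_le)
qed

abbreviation "fl l \<equiv> nat \<lfloor>tp l / dd\<rfloor>"

lemma fl_step:
  assumes l: "l \<in> JJ" and l': "l' \<in> JJ" and lt: "tp l < tp l'"
  shows "fl l < fl l'" "real (fl l') \<le> tp l' / dd" "tp l / dd < real (fl l) + 1"
proof -
  have "l \<noteq> l'" using lt by auto
  hence "dd \<le> tp l' - tp l" using tp_sep[OF l l'] lt by linarith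
  hence "tp l / dd + 1 \<le> tp l' / dd" using dpos div_step by blast
  hence "\<lfloor>tp l / dd + 1\<rfloor> \<le> \<lfloor>tp l' / dd\<rfloor>" by (rule floor_mono)
  hence A: "\<lfloor>tp l / dd\<rfloor> + 1 \<le> \<lfloor>tp l' / dd\<rfloor>" by simp
  have t0: "0 \<le> tp l" "0 \<le> tp l'" using par[OF l] par[OF l'] by auto
  hence nn: "0 \<le> \<lfloor>tp l / dd\<rfloor>" "0 \<le> \<lfloor>tp l' / dd\<rfloor>" using dpos by auto
  show "fl l < fl l'" using A nn by linarith
  show "real (fl l') \<le> tp l' / dd" using nn(2) by (simp add: of_nat_nat)
  show "tp l / dd < real (fl l) + 1" using nn(1) by (simp add: of_nat_nat)
qed

lemma class_gap:
  assumes l: "l \<in> JJ" and l': "l' \<in> JJ" and lt: "tp l < tp l'" and md: "fl l mod m = fl l' mod m"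
  shows "(real m - 1) * dd \<le> tp l' - tp l"
proof -
  have "fl l + m \<le> fl l'" using mod_gap_nat[OF fl_step(1)[OF l l' lt] md] .
  hence "real (fl l) + real m \<le> real (fl l')" by linarith
  hence "real (fl l) + real m \<le> tp l' / dd" using fl_step(2)[OF l l' lt] by linarith
  hence "tp l / dd - 1 + real m < tp l' / dd" using fl_step(3)[OF l l' lt] by linarith
  thus ?thesis using dpos div_step2 by blast
qed

lemma card_bound: "real NN \<le> LL / dd + 1"
proof -
  have inj: "inj_on fl JJ"
  proof (rule inj_onI)
    fix x y assume x: "x \<in> JJ" and y: "y \<in> JJ" and e: "fl x = fl y"
    show "x = y"
    proof (rule ccontr)
      assume "x \<noteq> y"
      hence "tp x \<noteq> tp y" using tp_inj x y by (auto simp: inj_on_def)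
      hence "tp x < tp y \<or> tp y < tp x" by linarith
      thus False using fl_step(1)[OF x y] fl_step(1)[OF y x] e by auto
    qed
  qed
  have sub: "fl ` JJ \<subseteq> {0..nat \<lfloor>LL / dd\<rfloor>}"
  proof
    fix k assume "k \<in> fl ` JJ"
    then obtain l where l: "l \<in> JJ" "k = fl l" by blast
    have "tp l / dd \<le> LL / dd" using par[OF l(1)] dpos by (simp add: divide_right_mono)
    hence "\<lfloor>tp l / dd\<rfloor> \<le> \<lfloor>LL / dd\<rfloor>" by (rule floor_mono)
    thus "k \<in> {0..nat \<lfloor>LL / dd\<rfloor>}" using l by (simp add: nat_mono)
  qed
  have "NN = card (fl ` JJ)" using card_image[OF inj] by simp
  also have "\<dots> \<le> card {0..nat \<lfloor>LL / dd\<rfloor>}" by (rule card_mono[OF _ sub]) simp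
  also have "\<dots> = nat \<lfloor>LL / dd\<rfloor> + 1" by simp
  finally have "real NN \<le> real (nat \<lfloor>LL / dd\<rfloor>) + 1" by linarith
  also have "real (nat \<lfloor>LL / dd\<rfloor>) \<le> LL / dd"
    using dpos L1 by (simp add: of_nat_nat)
  finally show ?thesis by simp
qed

abbreviation "JJ' \<equiv> {l \<in> JJ. Ch l \<noteq> {}}"

lemma order_sl:
  assumes l: "l \<in> JJ'" and l': "l' \<in> JJ'" and lt: "tp l < tp l'" and G: "0 < G" "G \<le> tp l' - tp l"
  shows "Sup (sl l) \<le> Inf (sl l') + 2 / (R * G)"
proof -
  have lJ: "l \<in> JJ" "l' \<in> JJ" using l l' by auto
  have ne: "sl l \<noteq> {}" "sl l' \<noteq> {}" using l l' by auto
  have pq: "inner p uu - 2 / (R * G) \<le> inner q uu" if p: "p \<in> Ch l" and q: "q \<in> Ch l'" for p q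
  proof -
    have g: "(tp l' - tp l) * (inner p uu - inner q uu) \<le> 2 / R" by (rule pair[OF lJ(1) p lJ(2) q])
    show ?thesis
    proof (cases "inner p uu - inner q uu \<le> 0")
      case True
      have "0 \<le> 2 / (R * G)" using Rpos G by simp
      then show ?thesis using True by linarith
    next
      case False
      have "G * (inner p uu - inner q uu) \<le> (tp l' - tp l) * (inner p uu - inner q uu)"
        using False G by (intro mult_right_mono) auto
      hence "G * (inner p uu - inner q uu) \<le> 2 / R" using g by linarith
      hence "inner p uu - inner q uu \<le> 2 / (R * G)" using G Rpos div_step3 by blast
      thus ?thesis by linarith
    qed
  qed
  have "\<And>p. p \<in> Ch l \<Longrightarrow> inner p uu - 2 / (R * G) \<le> Inf (sl l')"
    using pq ne(2) by (intro cInf_greatest) auto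
  hence "\<And>y. y \<in> sl l \<Longrightarrow> y \<le> Inf (sl l') + 2 / (R * G)" by force
  thus ?thesis using ne(1) by (intro cSup_least) auto
qed

lemma class_sum:
  assumes m: "2 \<le> m"
  shows "(\<Sum>l\<in>JJ'. Sup (sl l) - Inf (sl l)) \<le> real m / (h * LL) + 2 / (R * ((real m - 1) * dd)) * NN"
proof -
  define G where "G = (real m - 1) * dd"
  define \<epsilon> where "\<epsilon> = 2 / (R * G)"
  have Gp: "0 < G" using m dpos by (simp add: G_def)
  have ep: "0 \<le> \<epsilon>" using Gp Rpos by (simp add: \<epsilon>_def)
  have fin: "finite JJ'" by (rule finite_subset[OF _ finJ]) auto
  define cls where "cls l = fl l mod m" for l
  have cl: "(\<Sum>l\<in>{x \<in> JJ'. cls x = c}. Sup (sl l) - Inf (sl l)) \<le> 1 / (h * LL) + \<epsilon> * card {x \<in> JJ'. cls x = c}" for c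
  proof -
    have "(\<Sum>l\<in>{x \<in> JJ'. cls x = c}. Sup (sl l) - Inf (sl l)) \<le>
        1 / (2 * h * LL) - (- (1 / (2 * h * LL))) + \<epsilon> * card {x \<in> JJ'. cls x = c}"
    proof (rule interval_sum[where t = tp])
      show "finite {x \<in> JJ'. cls x = c}" by (rule finite_subset[OF _ fin]) auto
      show "\<forall>x\<in>{x \<in> JJ'. cls x = c}. - (1 / (2 * h * LL)) \<le> Inf (sl x) \<and> Inf (sl x) \<le> Sup (sl x) \<and> Sup (sl x) \<le> 1 / (2 * h * LL)"
        using sl_range by blast
      show "\<forall>x\<in>{x \<in> JJ'. cls x = c}. \<forall>y\<in>{x \<in> JJ'. cls x = c}. tp x < tp y \<longrightarrow> Sup (sl x) \<le> Inf (sl y) + \<epsilon>"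
      proof (intro ballI impI)
        fix x y assume x: "x \<in> {x \<in> JJ'. cls x = c}" and y: "y \<in> {x \<in> JJ'. cls x = c}" and lt: "tp x < tp y"
        have "G \<le> tp y - tp x" unfolding G_def
          using class_gap[of x y m] x y lt by (auto simp: cls_def)
        thus "Sup (sl x) \<le> Inf (sl y) + \<epsilon>" unfolding \<epsilon>_def
          using order_sl[of x y G] x y lt Gp by auto
      qed
      show "inj_on tp {x \<in> JJ'. cls x = c}" using tp_inj by (rule inj_on_subset) auto
      show "- (1 / (2 * h * LL)) \<le> 1 / (2 * h * LL)" using h1 L1 by simp
      show "0 \<le> \<epsilon>" by fact
    qed
    thus ?thesis by simp
  qed
  have grp: "(\<Sum>c\<in>{..<m}. \<Sum>l\<in>{x \<in> JJ'. cls x = c}. g l) = (\<Sum>l\<in>JJ'. g l)" for g :: "real^2 \<Rightarrow> real"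
    by (rule sum.group[OF fin]) (use m in \<open>auto simp: cls_def\<close>)
  have "(\<Sum>l\<in>JJ'. Sup (sl l) - Inf (sl l)) = (\<Sum>c\<in>{..<m}. \<Sum>l\<in>{x \<in> JJ'. cls x = c}. Sup (sl l) - Inf (sl l))"
    by (rule grp[symmetric])
  also have "\<dots> \<le> (\<Sum>c\<in>{..<m}. 1 / (h * LL) + \<epsilon> * card {x \<in> JJ'. cls x = c})"
    by (rule sum_mono) (rule cl)
  also have "\<dots> = real m / (h * LL) + \<epsilon> * (\<Sum>c\<in>{..<m}. \<Sum>l\<in>{x \<in> JJ'. cls x = c}. (1::real))"
    by (simp add: sum.distrib sum_distrib_left)
  also have "(\<Sum>c\<in>{..<m}. \<Sum>l\<in>{x \<in> JJ'. cls x = c}. (1::real)) = real (card JJ')"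
    using grp[of "\<lambda>_. 1"] by simp
  also have "real m / (h * LL) + \<epsilon> * real (card JJ') \<le> real m / (h * LL) + \<epsilon> * real NN"
  proof -
    have "card JJ' \<le> NN" by (rule card_mono[OF finJ]) auto
    hence "real (card JJ') \<le> real NN" by simp
    thus ?thesis using ep by (simp add: mult_left_mono)
  qed
  finally show ?thesis unfolding \<epsilon>_def G_def .
qed

end


context segctx
begin

lemma sum_JJ': "(\<Sum>l\<in>JJ. muv l) = (\<Sum>l\<in>JJ'. muv l)"
proof (rule sum.mono_neutral_right[OF finJ])
  show "JJ' \<subseteq> JJ" by auto
  show "\<forall>i\<in>JJ - JJ'. muv i = 0" by (auto simp: mu_Ch)
qed

lemma main_bound:
  defines "c1 \<equiv> 3 * \<rho>1 / \<rho>0" and "K2 \<equiv> K * sqrt \<rho>1" and "H0 \<equiv> 4 / \<rho>0"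
  shows "sqrt (R * r) * (\<Sum>l\<in>JJ. muv l) \<le>
     (4 * c1 + sqrt (3 * c1 * K2) + K2 * (3 * H0^2 / \<rho>0)) * (R * r / (h^2 * dd^2)) powr (1/4)"
proof -
  define Y where "Y = (R * r / (h^2 * dd^2)) powr (1/4)"
  define qR where "qR = sqrt R"
  define qr where "qr = sqrt r"
  define qh where "qh = sqrt h"
  define S where "S = sqrt (R * r) * (\<Sum>l\<in>JJ. muv l)"
  define N where "N = real NN"
  have hpos: "0 < h" using h1 by linarith
  have rpos: "0 < r" using rR by linarith
  have qRp: "0 < qR" using Rpos by (simp add: qR_def)
  have qrp: "0 < qr" using rpos by (simp add: qr_def)
  have qh1: "1 \<le> qh" using h1 by (simp add: qh_def)
  have qR2: "qR^2 = R" using Rpos by (simp add: qR_def)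
  have qr2: "qr^2 = r" using rpos by (simp add: qr_def)
  have qh2: "qh^2 = h" using hpos by (simp add: qh_def)
  have qRr: "sqrt (R * r) = qR * qr" by (simp add: qR_def qr_def real_sqrt_mult)
  have N10: "10 \<le> N" using ab(3) by (simp add: N_def)
  have Xp: "0 < R * r / (h^2 * dd^2)" using Rpos rpos hpos dpos by simp
  have Y0: "0 \<le> Y" by (simp add: Y_def)
  have Y2: "Y^2 = qR * qr / (qh^2 * dd)"
  proof -
    have "Y^2 = Y powr 2" using Xp by (simp add: Y_def powr_realpow[symmetric])
    also have "\<dots> = (R * r / (h^2 * dd^2)) powr (1/2)" unfolding Y_def powr_powr by simp
    also have "\<dots> = sqrt (R * r / (h^2 * dd^2))" using Xp by (simp add: powr_half_sqrt)
    also have "\<dots> = qR * qr / (h * dd)"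
      using hpos dpos by (simp add: real_sqrt_divide real_sqrt_mult qR_def qr_def)
    finally show ?thesis using qh2 by simp
  qed
  have Yge: "qr / qh / dd \<le> Y"
  proof (rule power2_le_imp_le[OF _ Y0])
    have "qr \<le> qR" using rR by (simp add: qr_def qR_def)
    hence "qr * qr \<le> dd * (qR * qr)" using d_ge1 qrp qRp
      by (metis mult_le_cancel_right_pos mult.assoc mult_le_cancel_right1 mult.commute order.trans mult_right_mono less_imp_le mult_left_mono mult_1)
    hence "(qr / qh / dd)^2 \<le> qR * qr / (qh^2 * dd)"
      using dpos qh1 by (simp add: field_simps power2_eq_square)
    thus "(qr / qh / dd)^2 \<le> Y^2" using Y2 by simp
  qed
  have c1p: "0 \<le> c1" using \<rho>0 \<rho>1 by (simp add: c1_def)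
  have K2p: "0 \<le> K2" using Kp \<rho>1 by (simp add: K2_def)
  have S2: "S \<le> K2 * N" using crude_sum by (simp add: S_def K2_def N_def)
  have Lb: "(N - 1) * dd \<le> LL"
  proof -
    have "N - 1 \<le> LL / dd" using card_bound by (simp add: N_def)
    thus ?thesis using dpos by (simp add: field_simps)
  qed
  have extra: "0 \<le> K2 * (3 * H0^2 / \<rho>0) * Y" using K2p \<rho>0 Y0 by simp
  show ?thesis
  proof (cases "h < H0")
    case True
    have Lle: "LL \<le> 2 * (qr^2 + 1) / \<rho>0"
    proof -
      have "LL \<le> norm b + norm a" by (rule norm_triangle_ineq4)
      also have "\<dots> \<le> (r + 1) / \<rho>0 + (r + 1) / \<rho>0" using normJ[OF aJ] normJ[OF bJ] by linarith
      finally show ?thesis using qr2 by simp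
    qed
    have "S \<le> K2 * (3 * H0^2 / \<rho>0) * Y"
    proof (rule small_arith[OF qRp qrp qh1 d_ge1 N10 \<rho>0(1) K2p Y0])
      show "qh^2 < H0" using True qh2 by simp
      show "qr \<le> qR" using rR by (simp add: qr_def qR_def)
      show "qR \<le> qh^2" using rR qh2 by (simp add: qR_def)
      show "10 \<le> qr^2" using qr2 rR by simp
      show "N \<le> LL / dd + 1" using card_bound by (simp add: N_def)
      show "LL \<le> 2 * (qr^2 + 1) / \<rho>0" by (rule Lle)
      show "S \<le> K2 * N" by (rule S2)
      show "qr / qh / dd \<le> Y" by (rule Yge)
    qed
    moreover have "0 \<le> (4 * c1 + sqrt (3 * c1 * K2)) * Y" using c1p K2p Y0 by simp
    ultimately show ?thesis unfolding S_def Y_def[symmetric] by (simp add: algebra_simps)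
  next
    case False
    hence hH: "4 / \<rho>0 \<le> h" by (simp add: H0_def)
    define q where "q = N * (qh / qR)"
    have qp: "0 < q" using N10 qh1 qRp by (simp add: q_def)
    define mm where "mm = nat \<lceil>q\<rceil> + 1"
    have "0 < real_of_int \<lceil>q\<rceil>" using qp le_of_int_ceiling[of q] by linarith
    hence "0 < \<lceil>q\<rceil>" by (simp only: of_int_0_less_iff)
    hence mm2: "2 \<le> mm" unfolding mm_def by arith
    have m1: "q \<le> real mm - 1" using qp by (simp add: mm_def)
    have m2: "real mm \<le> q + 2" using qp by (simp add: mm_def) linarith
    have "(\<Sum>l\<in>JJ'. muv l) \<le> (\<Sum>l\<in>JJ'. c1 * (Sup (sl l) - Inf (sl l)))"
      by (rule sum_mono) (use width[OF hH] in \<open>auto simp: c1_def\<close>)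
    also have "\<dots> = c1 * (\<Sum>l\<in>JJ'. Sup (sl l) - Inf (sl l))" by (simp add: sum_distrib_left)
    also have "\<dots> \<le> c1 * (real mm / (h * LL) + 2 / (R * ((real mm - 1) * dd)) * NN)"
      using class_sum[OF mm2] c1p by (intro mult_left_mono) auto
    finally have A: "(\<Sum>l\<in>JJ. muv l) \<le> c1 * (real mm / (h * LL) + 2 / (R * ((real mm - 1) * dd)) * NN)"
      using sum_JJ' by simp
    have S1: "S \<le> qR * qr * c1 * (real mm / (qh^2 * LL) + 2 / (qR^2 * ((real mm - 1) * dd)) * N)"
    proof -
      have "S \<le> sqrt (R * r) * (c1 * (real mm / (h * LL) + 2 / (R * ((real mm - 1) * dd)) * NN))"
        unfolding S_def using A Rpos rpos by (intro mult_left_mono) auto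
      thus ?thesis using qRr qh2 qR2 by (simp add: N_def mult.assoc)
    qed
    have "S \<le> (4 * c1 + sqrt (3 * c1 * K2)) * Y"
      by (rule large_arith[OF qRp qrp _ d_ge1 N10 c1p K2p Lb _ _ S1 S2 Y0 Y2 Yge])
         (use qh1 m1 m2 in \<open>auto simp: q_def\<close>)
    thus ?thesis using extra unfolding S_def Y_def[symmetric] by (simp add: algebra_simps)
  qed
qed

end


theorem lemma6p1:
  fixes \<Omega> :: "(real^2) set"
  assumes "bounded \<Omega>" "open \<Omega>" "convex \<Omega>" "0 \<in> \<Omega>"
    and "\<exists>K. \<forall>\<theta>. norm \<theta> = 1 \<longrightarrow> (\<forall>\<delta>>0. \<delta> powr (-1/2) * mu \<Omega> \<theta> \<delta> \<le> K)"
  shows "\<exists>C>0. \<forall>r R h a b.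
    10 \<le> r \<and> r \<le> R \<and> sqrt R \<le> h \<and> h \<le> R \<and> a \<in> Z2 \<and> b \<in> Z2 \<and>
    card (closed_segment a b \<inter> Z2) \<ge> 10 \<and> dilate9 a b \<subseteq> annulus \<Omega> r h \<longrightarrow>
    (let JJ = closed_segment a b \<inter> Z2; d = lattice_gap JJ;
         T = R powr (3/4) * d powr (1/2) * h powr (-1/2) * r powr (-1/4);
         S = sqrt (R * r) * (\<Sum>l\<in>JJ. mu \<Omega> ((1 / norm l) *\<^sub>R l) (1 / (R * norm l)))
     in (real (card JJ) \<le> T \<longrightarrow> S \<le> C * (R * r / (h^2 * d^2)) powr (1/4)) \<and>
        (real (card JJ) \<ge> T \<longrightarrow> S \<le> C * (r * real (card JJ) / (h * d^2)) powr (1/3)))"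
proof -
  obtain K where K: "\<forall>\<theta>. norm \<theta> = 1 \<longrightarrow> (\<forall>\<delta>>0. \<delta> powr (-1/2) * mu \<Omega> \<theta> \<delta> \<le> K)"
    using assms(5) by blast
  define K' where "K' = max K 0"
  have K'0: "0 \<le> K'" by (simp add: K'_def)
  have K': "\<forall>\<theta>. norm \<theta> = 1 \<longrightarrow> (\<forall>\<delta>>0. \<delta> powr (-1/2) * mu \<Omega> \<theta> \<delta> \<le> K')"
    using K unfolding K'_def by (meson max.coboundedI1)
  obtain e where e: "e > 0" "ball 0 e \<subseteq> \<Omega>" using assms(2,4) open_contains_ball by blast
  define \<rho>0 where "\<rho>0 = e / 2"
  have \<rho>0: "0 < \<rho>0" "cball 0 \<rho>0 \<subseteq> \<Omega>" using e by (auto simp: \<rho>0_def)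
  obtain B where B: "\<forall>x\<in>\<Omega>. norm x \<le> B" using assms(1) bounded_iff by blast
  define \<rho>1 where "\<rho>1 = max B 1"
  have \<rho>1: "1 \<le> \<rho>1" "\<Omega> \<subseteq> cball 0 \<rho>1" using B by (auto simp: \<rho>1_def)
  have \<Omega>ne: "\<Omega> \<noteq> {}" using assms(4) by auto
  define C0 where "C0 = 4 * (3 * \<rho>1 / \<rho>0) + sqrt (3 * (3 * \<rho>1 / \<rho>0) * (K' * sqrt \<rho>1))
      + K' * sqrt \<rho>1 * (3 * (4 / \<rho>0)^2 / \<rho>0)"
  have C00: "0 \<le> C0" using \<rho>0 \<rho>1 K'0 by (simp add: C0_def)
  define C where "C = C0 + 1"
  show ?thesis
  proof (intro exI[of _ C] conjI allI impI)
    show "0 < C" using C00 by (simp add: C_def)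
    fix r R h :: real and a b :: "real^2"
    assume H: "10 \<le> r \<and> r \<le> R \<and> sqrt R \<le> h \<and> h \<le> R \<and> a \<in> Z2 \<and> b \<in> Z2 \<and>
      card (closed_segment a b \<inter> Z2) \<ge> 10 \<and> dilate9 a b \<subseteq> annulus \<Omega> r h"
    interpret segctx \<Omega> \<rho>0 \<rho>1 K' r R h a b
      by unfold_locales (use assms(1) \<Omega>ne \<rho>0 \<rho>1 K'0 K' H in auto)
    define Y where "Y = (R * r / (h^2 * dd^2)) powr (1/4)"
    define S where "S = sqrt (R * r) * (\<Sum>l\<in>JJ. mu \<Omega> ((1 / norm l) *\<^sub>R l) (1 / (R * norm l)))"
    have Y0: "0 \<le> Y" by (simp add: Y_def)
    have SY: "S \<le> C * Y"
    proof -
      have "S \<le> C0 * Y" using main_bound unfolding S_def Y_def C0_def by simp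
      also have "\<dots> \<le> C * Y" using Y0 by (simp add: C_def algebra_simps)
      finally show ?thesis .
    qed
    have Cp: "0 \<le> C" using C00 by (simp add: C_def)
    show "let JJ = closed_segment a b \<inter> Z2; d = lattice_gap JJ;
         T = R powr (3/4) * d powr (1/2) * h powr (-1/2) * r powr (-1/4);
         S = sqrt (R * r) * (\<Sum>l\<in>JJ. mu \<Omega> ((1 / norm l) *\<^sub>R l) (1 / (R * norm l)))
     in (real (card JJ) \<le> T \<longrightarrow> S \<le> C * (R * r / (h^2 * d^2)) powr (1/4)) \<and>
        (real (card JJ) \<ge> T \<longrightarrow> S \<le> C * (r * real (card JJ) / (h * d^2)) powr (1/3))"
      unfolding Let_def
    proof (intro conjI impI)
      show "sqrt (R * r) * (\<Sum>l\<in>JJ. mu \<Omega> ((1 / norm l) *\<^sub>R l) (1 / (R * norm l)))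
          \<le> C * (R * r / (h^2 * dd^2)) powr (1/4)"
        using SY unfolding S_def Y_def .
    next
      assume T: "R powr (3/4) * dd powr (1/2) * h powr (-1/2) * r powr (-1/4) \<le> real NN"
      have "Y \<le> (r * real NN / (h * dd^2)) powr (1/3)" unfolding Y_def
      proof (rule powr_cmp[OF _ _ _ _ _ T])
        show "0 < R" by (rule Rpos)
        show "0 < r" using H by linarith
        show "0 < h" using h1 by linarith
        show "0 < dd" by (rule dpos)
        show "0 < real NN" using H by simp
      qed
      hence "C * Y \<le> C * (r * real NN / (h * dd^2)) powr (1/3)" using Cp by (rule mult_left_mono)
      thus "sqrt (R * r) * (\<Sum>l\<in>JJ. mu \<Omega> ((1 / norm l) *\<^sub>R l) (1 / (R * norm l)))
          \<le> C * (r * real NN / (h * dd^2)) powr (1/3)"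
        using SY unfolding S_def by linarith
    qed
  qed
qed

end
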